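(* Let $Y$ be any one of the following varieties, or any secant variety $\sigma_r(Y)$, $r\ge1$, of one of them: (a) the Grassmannian $\mathbb{G}(k,n)\subset\mathbb{P}\bigwedge^k\mathbb{C}^n$ in its Plücker embedding, $1\le k<n$; (b) the tangential variety $\tau_{d,n}=\overline{\{[L^{d-1}M]\}}\subset\mathbb{P}\mathrm{Sym}^d\mathbb{C}^{n+1}$, $d,n\ge1$; (c) the Chow variety $\mathbb{X}_{d,n}=\{[L_1\cdots L_d]: L_i\in(\mathbb{C}^{n+1})^\vee\}\subset\mathbb{P}\mathrm{Sym}^d\mathbb{C}^{n+1}$; (d) the variety of reducible forms $\mathcal{R}_{\mathbf{d},n}=\{[F_1\cdots F_k]: F_i\in\mathrm{Sym}^{d_i}\mathbb{C}^{n+1}\}\subset\mathbb{P}\mathrm{Sym}^d\mathbb{C}^{n+1}$ for fixed positive integers $\mathbf{d}=(d_1,\dots,d_k)$ with $d_1+\cdots+d_k=d$. Then $\operatorname{Hrk}_Y(p)<\infty$ for every point $p$ of the ambient projective space. For example, for every $r\ge1$ every homogeneous polynomial of degree $d$ is a coefficient-wise product of finitely many polynomials of the form $\sum_{i=1}^r L_i^{d-1}M_i$ with $L_i,M_i$ linear.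
   Context: Ambient spaces use the standard coordinates: Plücker coordinates on $\mathbb{P}\bigwedge^k\mathbb{C}^n$, monomial coefficients on $\mathbb{P}\mathrm{Sym}^d\mathbb{C}^{n+1}$ (degree-$d$ forms in $x_0,\dots,x_n$). Hadamard product of points: $(p_0:\cdots:p_N)\star(q_0:\cdots:q_N)=(p_0q_0:\cdots:p_Nq_N)$, defined when not all $p_iq_i$ vanish. For a variety $X$, $\operatorname{Hrk}_X(q)=\min\{m\mid q=p_1\star\cdots\star p_m,\ p_i\in X\}$, or $\infty$ if no such decomposition exists. $\sigma_r(Y)$ denotes the Zariski closure of the union of linear spans of $r$ points of $Y$. *)

theory Defs
  imports "Jordan_Normal_Form.Determinant" "HOL-Library.Poly_Mapping" "HOL-Library.Extended_Nat"
begin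

text \<open>A vector of the ambient space C^I (I a finite index set of coordinates) is a
function 'i => complex that vanishes outside I.  A projective subvariety X of P(C^I) is
represented by its affine cone (a set of such vectors, containing 0 and closed under scaling);
points of P(C^I) are the nonzero vectors up to nonzero scalars.\<close>

definition supp_vec :: "'i set \<Rightarrow> ('i \<Rightarrow> complex) \<Rightarrow> bool" where
  "supp_vec I p \<longleftrightarrow> (\<forall>i. i \<notin> I \<longrightarrow> p i = 0)"

definition nonzero_vec :: "'i set \<Rightarrow> ('i \<Rightarrow> complex) \<Rightarrow> bool" where
  "nonzero_vec I p \<longleftrightarrow> (\<exists>i\<in>I. p i \<noteq> 0)"

inductive_set poly_fun :: "'i set \<Rightarrow> (('i \<Rightarrow> complex) \<Rightarrow> complex) set" for I where
  pf_const: "(\<lambda>x. c) \<in> poly_fun I"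
| pf_coord: "i \<in> I \<Longrightarrow> (\<lambda>x. x i) \<in> poly_fun I"
| pf_add: "f \<in> poly_fun I \<Longrightarrow> g \<in> poly_fun I \<Longrightarrow> (\<lambda>x. f x + g x) \<in> poly_fun I"
| pf_mult: "f \<in> poly_fun I \<Longrightarrow> g \<in> poly_fun I \<Longrightarrow> (\<lambda>x. f x * g x) \<in> poly_fun I"

text \<open>Zariski closure in C^I (for cones: the cone over the projective Zariski closure).\<close>
definition zar_closure :: "'i set \<Rightarrow> ('i \<Rightarrow> complex) set \<Rightarrow> ('i \<Rightarrow> complex) set" where
  "zar_closure I X = {p. supp_vec I p \<and>
      (\<forall>f\<in>poly_fun I. (\<forall>x\<in>X. f x = 0) \<longrightarrow> f p = 0)}"

text \<open>Secant variety sigma_r(Y) (as a cone): Zariski closure of the union of the linear spans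
of r points of Y, i.e. of all sums of r vectors of the cone over Y.\<close>
definition secant :: "'i set \<Rightarrow> nat \<Rightarrow> ('i \<Rightarrow> complex) set \<Rightarrow> ('i \<Rightarrow> complex) set" where
  "secant I r Y = zar_closure I {(\<lambda>i. \<Sum>j<r. v j i) | v. \<forall>j<r. v j \<in> Y}"

text \<open>Hadamard rank: q = p_1 * ... * p_m (coordinatewise, as projective points) with
p_j in X; the minimum of such m, or infinity.\<close>
definition hadamard_decomp :: "'i set \<Rightarrow> ('i \<Rightarrow> complex) set \<Rightarrow> ('i \<Rightarrow> complex) \<Rightarrow> nat \<Rightarrow> bool" where
  "hadamard_decomp I X q m \<longleftrightarrow> (\<exists>v c. c \<noteq> 0 \<and>
      (\<forall>j<m. v j \<in> X \<and> nonzero_vec I (v j)) \<and>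
      (\<forall>i\<in>I. q i = c * (\<Prod>j<m. v j i)))"

definition Hrk :: "'i set \<Rightarrow> ('i \<Rightarrow> complex) set \<Rightarrow> ('i \<Rightarrow> complex) \<Rightarrow> enat" where
  "Hrk I X q = Inf (enat ` {m. m \<ge> 1 \<and> hadamard_decomp I X q m})"

definition proj_points :: "'i set \<Rightarrow> ('i \<Rightarrow> complex) set" where
  "proj_points I = {q. supp_vec I q \<and> nonzero_vec I q}"

text \<open>Coordinates of wedge^k C^n: k-element subsets of {0..<n}.\<close>
definition ksubsets :: "nat \<Rightarrow> nat \<Rightarrow> nat set set" where
  "ksubsets k n = {S. S \<subseteq> {..<n} \<and> card S = k}"

definition pluecker :: "nat \<Rightarrow> nat \<Rightarrow> (nat \<Rightarrow> nat \<Rightarrow> complex) \<Rightarrow> nat set \<Rightarrow> complex" where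
  "pluecker k n v S = (if S \<in> ksubsets k n then
      det (mat k k (\<lambda>(i, j). v i (sorted_list_of_set S ! j))) else 0)"

definition grassmannian_cone :: "nat \<Rightarrow> nat \<Rightarrow> (nat set \<Rightarrow> complex) set" where
  "grassmannian_cone k n = {pluecker k n v | v. True}"

type_synonym mpoly = "(nat \<Rightarrow>\<^sub>0 nat) \<Rightarrow>\<^sub>0 complex"

text \<open>Exponent vectors of degree-d monomials in x_0..x_n (the coordinates of P Sym^d C^(n+1)).\<close>
definition monoms :: "nat \<Rightarrow> nat \<Rightarrow> (nat \<Rightarrow>\<^sub>0 nat) set" where
  "monoms d n = {\<alpha>. Poly_Mapping.keys \<alpha> \<subseteq> {..n} \<and> (\<Sum>i\<le>n. Poly_Mapping.lookup \<alpha> i) = d}"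

definition forms :: "nat \<Rightarrow> nat \<Rightarrow> mpoly set" where
  "forms d n = {F. Poly_Mapping.keys F \<subseteq> monoms d n}"

definition tangential_cone :: "nat \<Rightarrow> nat \<Rightarrow> ((nat \<Rightarrow>\<^sub>0 nat) \<Rightarrow> complex) set" where
  "tangential_cone d n = zar_closure (monoms d n)
     {Poly_Mapping.lookup (L ^ (d - 1) * M) | L M. L \<in> forms 1 n \<and> M \<in> forms 1 n}"

definition chow_cone :: "nat \<Rightarrow> nat \<Rightarrow> ((nat \<Rightarrow>\<^sub>0 nat) \<Rightarrow> complex) set" where
  "chow_cone d n = {Poly_Mapping.lookup (\<Prod>i<d. L i) | L. \<forall>i<d. L i \<in> forms 1 n}"

definition reducible_cone :: "nat list \<Rightarrow> nat \<Rightarrow> ((nat \<Rightarrow>\<^sub>0 nat) \<Rightarrow> complex) set" where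
  "reducible_cone ds n = {Poly_Mapping.lookup (\<Prod>i<length ds. F i) | F. \<forall>i<length ds. F i \<in> forms (ds ! i) n}"

end

theory Submission
  imports Defs "HOL-Computational_Algebra.Fundamental_Theorem_Algebra"
begin

lemma zar_closure_sup: "x \<in> X \<Longrightarrow> supp_vec I x \<Longrightarrow> x \<in> zar_closure I X"
  unfolding zar_closure_def by auto

lemma in_secant:
  assumes "y \<in> Y" "(\<lambda>_. 0) \<in> Y" "supp_vec I y" "r \<ge> 1"
  shows "y \<in> secant I r Y"
proof -
  define v where "v = (\<lambda>j::nat. if j = 0 then y else (\<lambda>_. 0))"
  have "(\<Sum>j<r. v j i) = y i" for i
  proof -
    have "(\<Sum>j<r. v j i) = (\<Sum>j<r. if j = 0 then y i else 0)"
      by (rule sum.cong) (auto simp: v_def)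
    also have "\<dots> = y i" using assms(4) by (simp add: sum.delta)
    finally show ?thesis .
  qed
  then have e: "(\<lambda>i. \<Sum>j<r. v j i) = y" by (rule ext)
  have "\<forall>j<r. v j \<in> Y" using assms(1,2) by (simp add: v_def)
  then have "y \<in> {(\<lambda>i. \<Sum>j<r. v j i) | v. \<forall>j<r. v j \<in> Y}"
    unfolding e[symmetric] by (intro CollectI exI[of _ v]) simp
  then show ?thesis unfolding secant_def by (rule zar_closure_sup[OF _ assms(3)])
qed


lemma Hrk_finI:
  assumes "m \<ge> 1" "hadamard_decomp I X q m"
  shows "Hrk I X q < \<infinity>"
proof -
  have "Hrk I X q \<le> enat m" unfolding Hrk_def using assms by (auto intro!: Inf_lower)
  also have "\<dots> < \<infinity>" by simp
  finally show ?thesis .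
qed

lemma interp:
  fixes r :: "'i \<Rightarrow> complex"
  assumes "finite I" "inj_on r I"
  shows "\<exists>P. degree P \<le> card I - 1 \<and> (\<forall>i\<in>I. poly P (r i) = v i)"
  using assms
proof (induction I rule: finite_induct)
  case empty
  then show ?case by (intro exI[of _ 0]) auto
next
  case (insert x I)
  then obtain P where P: "degree P \<le> card I - 1" "\<forall>i\<in>I. poly P (r i) = v i" by auto
  define W where "W = (\<Prod>i\<in>I. [:- r i, 1:])"
  have Wr: "poly W (r i) = 0" if "i \<in> I" for i
    unfolding W_def poly_prod using that insert(1) by (intro prod_zero bexI[of _ i]) auto
  have Wx: "poly W (r x) \<noteq> 0"
  proof -
    have "r x \<noteq> r i" if "i \<in> I" for i
      using insert(2,4) that unfolding inj_on_def by blast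
    then show ?thesis unfolding W_def poly_prod using insert(1) by (simp add: prod_zero_iff)
  qed
  have dW: "degree W \<le> card I"
    unfolding W_def by (rule order.trans[OF degree_prod_sum_le]) (auto simp: insert)
  define c where "c = (v x - poly P (r x)) / poly W (r x)"
  define P' where "P' = P + smult c W"
  have "degree P' \<le> max (degree P) (degree (smult c W))" unfolding P'_def by (rule degree_add_le_max)
  also have "\<dots> \<le> card I" using P dW by (auto intro: order.trans[OF degree_smult_le])
  finally have "degree P' \<le> card (insert x I) - 1" using insert by simp
  moreover have "\<forall>i\<in>insert x I. poly P' (r i) = v i"
    using P Wr Wx by (auto simp: P'_def c_def)
  ultimately show ?case by blast
qed


lemma prod_list_map_nth: "prod_list (map f xs) = (\<Prod>j<length xs. f (xs ! j))"
  by (simp add: prod.list_conv_set_nth atLeast0LessThan)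

lemma pencil_Hrk:
  fixes a b :: "'i \<Rightarrow> complex" and y :: "complex \<Rightarrow> 'i \<Rightarrow> complex"
  assumes fin: "finite I" and Y: "\<And>t. y t \<in> Y"
    and lin: "\<And>t i. i \<in> I \<Longrightarrow> y t i = a i * t + b i"
    and a: "\<And>i. i \<in> I \<Longrightarrow> a i \<noteq> 0" and inj: "inj_on (\<lambda>i. b i / a i) I"
    and q: "q \<in> proj_points I"
  shows "Hrk I Y q < \<infinity>"
proof -
  define N where "N = card I"
  obtain i0 where i0: "i0 \<in> I" "q i0 \<noteq> 0" using q by (auto simp: proj_points_def nonzero_vec_def)
  have N1: "N \<ge> 1" using i0 fin by (simp add: N_def Suc_le_eq card_gt_0_iff) blast
  define r where "r i = - b i / a i" for i
  have injr: "inj_on r I" using inj unfolding r_def inj_on_def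
    by (metis minus_divide_left neg_equal_iff_equal)
  obtain P where P: "degree P \<le> N - 1" "\<And>i. i \<in> I \<Longrightarrow> poly P (r i) = (-1)^N * q i / a i ^ N"
    using interp[OF fin injr, of "\<lambda>i. (-1)^N * q i / a i ^ N"] unfolding N_def by blast
  define W where "W = (\<Prod>i\<in>I. [:- r i, 1:])"
  have dW: "degree W = N" unfolding W_def N_def
    by (subst degree_prod_eq_sum_degree) auto
  have lW: "lead_coeff W = 1" unfolding W_def by (simp add: lead_coeff_prod)
  have Wr: "poly W (r i) = 0" if "i \<in> I" for i
    unfolding W_def poly_prod using that fin by (intro prod_zero bexI[of _ i]) auto
  define G where "G = P + W"
  have dPW: "degree P < degree W" using P(1) dW N1 by linarith
  have dG: "degree G = N" unfolding G_def using dPW dW by (simp add: degree_add_eq_right)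
  have lG: "lead_coeff G = 1" unfolding G_def using lead_coeff_add_le[OF dPW] lW by metis
  have G0: "G \<noteq> 0" using lG by auto
  obtain A where A: "size A = N" "G = smult (lead_coeff G) (\<Prod>x\<in>#A. [:-x, 1:])"
    using alg_closed_imp_factorization[OF G0] dG by auto
  obtain xs where xs: "mset xs = A" using ex_mset by blast
  have lxs: "length xs = N" using A(1) xs by (metis size_mset)
  have polyG: "poly G z = (\<Prod>j<N. z - xs ! j)" for z
  proof -
    have "poly G z = poly (\<Prod>x\<in>#A. [:-x, 1:]) z" using A(2) lG by (metis smult_1_left)
    also have "\<dots> = (\<Prod>x\<in>#A. z - x)" by (simp add: poly_prod_mset)
    also have "\<dots> = prod_list (map (\<lambda>x. z - x) xs)" unfolding xs[symmetric]
      by (metis mset_map prod_mset_prod_list)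
    also have "\<dots> = (\<Prod>j<N. z - xs ! j)" by (simp add: prod_list_map_nth lxs)
    finally show ?thesis .
  qed
  define v where "v j = y (xs ! j)" for j
  have prodv: "(\<Prod>j<N. v j i) = q i" if i: "i \<in> I" for i
  proof -
    have ai: "a i \<noteq> 0" using a i .
    have "v j i = a i * (-1) * (r i - xs ! j)" for j
      using ai by (simp add: v_def lin[OF i] r_def field_simps)
    then have "(\<Prod>j<N. v j i) = (\<Prod>j<N. a i * (-1) * (r i - xs ! j))" by simp
    also have "\<dots> = (\<Prod>j<N. a i * (-1)) * (\<Prod>j<N. r i - xs ! j)"
      by (rule prod.distrib)
    also have "\<dots> = (a i * (-1)) ^ N * poly G (r i)"
      by (simp only: polyG prod_constant card_lessThan)
    also have "poly G (r i) = (-1)^N * q i / a i ^ N"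
      using P(2)[OF i] Wr[OF i] by (simp add: G_def)
    finally have e: "(\<Prod>j<N. v j i) = (a i * (-1)) ^ N * ((-1)^N * q i / a i ^ N)" .
    have m1: "((-1::complex)^N * (-1)^N) = 1"
      by (metis power_mult_distrib mult_minus1 minus_minus power_one)
    have aN: "a i ^ N \<noteq> 0" using ai by simp
    have "(a i * (-1)) ^ N * ((-1)^N * q i / a i ^ N) = ((-1::complex)^N * (-1)^N) * q i * (a i ^ N / a i ^ N)"
      by (simp only: power_mult_distrib times_divide_eq_right mult_ac divide_inverse)
    also have "\<dots> = q i" using m1 aN ai by simp
    finally show ?thesis using e by simp
  qed
  have hd: "hadamard_decomp I Y q N"
    unfolding hadamard_decomp_def
  proof (intro exI[of _ v] exI[of _ 1] conjI allI impI ballI)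
    show "(1::complex) \<noteq> 0" by simp
    fix j assume j: "j < N"
    show "v j \<in> Y" by (simp add: v_def Y)
    show "nonzero_vec I (v j)"
    proof (rule ccontr)
      assume "\<not> nonzero_vec I (v j)"
      then have "v j i0 = 0" using i0 by (auto simp: nonzero_vec_def)
      then have "(\<Prod>j<N. v j i0) = 0" using j by (intro prod_zero bexI[of _ j]) auto
      then show False using prodv[OF i0(1)] i0(2) by simp
    qed
  next
    fix i assume "i \<in> I"
    then show "q i = 1 * (\<Prod>j<N. v j i)" using prodv by simp
  qed
  show ?thesis using Hrk_finI[OF N1 hd] .
qed

lemma digits_bound:
  fixes f :: "nat \<Rightarrow> nat"
  assumes "\<forall>i<n. f i < b"
  shows "(\<Sum>i<n. f i * b ^ i) < b ^ n"
  using assms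
proof (induction n)
  case 0 then show ?case by simp
next
  case (Suc n)
  then have IH: "(\<Sum>i<n. f i * b ^ i) < b ^ n" and fn: "f n < b" by auto
  have "(\<Sum>i<Suc n. f i * b ^ i) = (\<Sum>i<n. f i * b ^ i) + f n * b ^ n" by simp
  also have "\<dots> < b ^ n + f n * b ^ n" using IH by simp
  also have "\<dots> = (f n + 1) * b ^ n" by simp
  also have "\<dots> \<le> b * b ^ n" using fn by (intro mult_right_mono) auto
  finally show ?case by simp
qed

lemma digits_inj:
  fixes f g :: "nat \<Rightarrow> nat"
  assumes "\<forall>i<n. f i < b" "\<forall>i<n. g i < b" "(\<Sum>i<n. f i * b ^ i) = (\<Sum>i<n. g i * b ^ i)"
  shows "\<forall>i<n. f i = g i"
  using assms
proof (induction n)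
  case 0 then show ?case by simp
next
  case (Suc n)
  define S1 where "S1 = (\<Sum>i<n. f i * b ^ i)"
  define S2 where "S2 = (\<Sum>i<n. g i * b ^ i)"
  have b1: "S1 < b ^ n" unfolding S1_def using Suc.prems by (intro digits_bound) auto
  have b2: "S2 < b ^ n" unfolding S2_def using Suc.prems by (intro digits_bound) auto
  have eq: "S1 + f n * b ^ n = S2 + g n * b ^ n" using Suc.prems(3) by (simp add: S1_def S2_def)
  have "(S1 + f n * b ^ n) mod b ^ n = S1" using b1 by simp
  moreover have "(S2 + g n * b ^ n) mod b ^ n = S2" using b2 by simp
  ultimately have s: "S1 = S2" using eq by simp
  have bn: "b ^ n > 0" using b1 by linarith
  have "(S1 + f n * b ^ n) div b ^ n = f n" using b1 bn by simp
  moreover have "(S2 + g n * b ^ n) div b ^ n = g n" using b2 bn by simp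
  ultimately have fg: "f n = g n" using eq by simp
  have "\<forall>i<n. f i = g i" using Suc.IH Suc.prems s by (simp add: S1_def S2_def)
  then show ?case using fg less_Suc_eq by auto
qed

lemma det_lin_row:
  fixes a b :: "nat \<Rightarrow> 'a::comm_ring_1"
  assumes r: "r < k"
  shows "det (mat k k (\<lambda>(i,j). if i = r then t * a j + b j else c i j)) =
         t * det (mat k k (\<lambda>(i,j). if i = r then a j else c i j)) +
         det (mat k k (\<lambda>(i,j). if i = r then b j else c i j))"
proof -
  let ?M = "\<lambda>f. mat k k (\<lambda>(i,j). if i = r then f j else c i j)"
  have pr: "(\<Prod>i\<in>{0..<k}. ?M f $$ (i, p i)) = f (p r) * (\<Prod>i\<in>{0..<k}-{r}. c i (p i))"
    if p: "p permutes {0..<k}" for p f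
  proof -
    have pin: "p i < k" if "i < k" for i using permutes_in_image[OF p] that by auto
    have "(\<Prod>i\<in>{0..<k}. ?M f $$ (i, p i)) = ?M f $$ (r, p r) * (\<Prod>i\<in>{0..<k}-{r}. ?M f $$ (i, p i))"
      using r by (intro prod.remove) auto
    also have "?M f $$ (r, p r) = f (p r)" using r pin by simp
    also have "(\<Prod>i\<in>{0..<k}-{r}. ?M f $$ (i, p i)) = (\<Prod>i\<in>{0..<k}-{r}. c i (p i))"
      using pin by (intro prod.cong) auto
    finally show ?thesis .
  qed
  have "det (?M (\<lambda>j. t * a j + b j)) = (\<Sum>p\<in>{p. p permutes {0..<k}}. signof p * (\<Prod>i\<in>{0..<k}. ?M (\<lambda>j. t * a j + b j) $$ (i, p i)))"
    by (rule det_def') simp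
  also have "\<dots> = (\<Sum>p\<in>{p. p permutes {0..<k}}. t * (signof p * (\<Prod>i\<in>{0..<k}. ?M a $$ (i, p i))) + signof p * (\<Prod>i\<in>{0..<k}. ?M b $$ (i, p i)))"
  proof (rule sum.cong[OF refl])
    fix p assume "p \<in> {p. p permutes {0..<k}}"
    then have p: "p permutes {0..<k}" by simp
    show "signof p * (\<Prod>i\<in>{0..<k}. ?M (\<lambda>j. t * a j + b j) $$ (i, p i)) =
      t * (signof p * (\<Prod>i\<in>{0..<k}. ?M a $$ (i, p i))) + signof p * (\<Prod>i\<in>{0..<k}. ?M b $$ (i, p i))"
      unfolding pr[OF p] by (simp add: algebra_simps)
  qed
  also have "\<dots> = t * det (?M a) + det (?M b)"
    by (simp add: det_def'[of _ k] sum.distrib sum_distrib_left)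
  finally show ?thesis .
qed

lemma vdm_ne0:
  fixes z :: "nat \<Rightarrow> complex"
  assumes inj: "inj_on z {..<k}"
  shows "det (mat k k (\<lambda>(i,j). z j ^ i)) \<noteq> 0"
proof
  let ?A = "mat k k (\<lambda>(i,j). z j ^ i)"
  assume "det ?A = 0"
  then have "det (transpose_mat ?A) = 0" using det_transpose[of ?A k] by simp
  then obtain v where v: "v \<in> carrier_vec k" "v \<noteq> 0\<^sub>v k" "transpose_mat ?A *\<^sub>v v = 0\<^sub>v k"
    using det_0_iff_vec_prod_zero[of "transpose_mat ?A" k] by auto
  define P where "P = (\<Sum>j<k. monom (v $ j) j)"
  have rowv: "(\<Sum>j<k. z i ^ j * v $ j) = 0" if i: "i < k" for i
  proof -
    have "(transpose_mat ?A *\<^sub>v v) $ i = 0" using v(3) i by simp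
    then show ?thesis using i v(1)
      by (simp add: scalar_prod_def atLeast0LessThan row_def)
  qed
  have roots: "poly P (z i) = 0" if "i < k" for i
    using rowv[OF that] by (simp add: P_def poly_sum poly_monom mult.commute)
  have coeffP: "coeff P j = v $ j" if "j < k" for j
    using that by (simp add: P_def coeff_sum coeff_monom)
  have P0: "P = 0"
  proof (rule ccontr)
    assume P0: "P \<noteq> 0"
    have k0: "k > 0" using v(1,2) by (metis P0 P_def lessThan_0 not_gr0 sum.empty)
    have dP: "degree P < k"
      unfolding P_def using k0 by (intro degree_sum_less) (auto intro: le_less_trans[OF degree_monom_le])
    have "z ` {..<k} \<subseteq> {x. poly P x = 0}" using roots by auto
    then have "card (z ` {..<k}) \<le> card {x. poly P x = 0}"
      using poly_roots_finite[OF P0] by (intro card_mono) auto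
    also have "\<dots> \<le> degree P" by (rule card_poly_roots_bound[OF P0])
    finally show False using card_image[OF inj] dP by simp
  qed
  have "v = 0\<^sub>v k"
    by (rule eq_vecI) (use v(1) coeffP P0 in auto)
  then show False using v(2) by simp
qed


lemma hprod_deg:
  fixes z :: "nat \<Rightarrow> complex"
  shows "degree (\<Prod>j<k. [:-z j, 1:]) = k \<and> coeff (\<Prod>j<k. [:-z j, 1:]) k = 1"
proof -
  have d: "degree (\<Prod>j<k. [:-z j, 1:]) = k" by (simp add: degree_prod_eq_sum_degree)
  have "lead_coeff (\<Prod>j<k. [:-z j, 1:]) = 1" by (simp only: lead_coeff_prod) simp
  then show ?thesis using d by simp
qed

lemma coeff_mult_lin:
  fixes p :: "'a::comm_ring_1 poly"
  shows "coeff (p * [:a, 1:]) (Suc m) = a * coeff p (Suc m) + coeff p m"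
proof -
  have "p * [:a, 1:] = smult a p + pCons 0 p" by (simp add: mult_pCons_right)
  then show ?thesis by simp
qed

lemma vieta2:
  fixes z :: "nat \<Rightarrow> complex"
  shows "coeff (\<Prod>j<Suc k. [:-z j, 1:]) k = - (\<Sum>j<Suc k. z j)"
proof (induction k)
  case 0 then show ?case by simp
next
  case (Suc k)
  have "(\<Prod>j<Suc (Suc k). [:-z j, 1:]) = (\<Prod>j<Suc k. [:-z j, 1:]) * [:-z (Suc k), 1:]"
    by simp
  then have "coeff (\<Prod>j<Suc (Suc k). [:-z j, 1:]) (Suc k) =
     - z (Suc k) * coeff (\<Prod>j<Suc k. [:-z j, 1:]) (Suc k) + coeff (\<Prod>j<Suc k. [:-z j, 1:]) k"
    by (simp only: coeff_mult_lin)
  also have "coeff (\<Prod>j<Suc k. [:-z j, 1:]) (Suc k) = 1"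
    using hprod_deg[of z "Suc k"] by simp
  finally show ?case using Suc.IH by simp
qed

lemma root_det:
  fixes z :: "nat \<Rightarrow> complex"
  assumes k: "k = Suc m"
  shows "det (mat k k (\<lambda>(i,j). if i = m then (- (\<Sum>l<k. z l)) * z j ^ m + z j ^ k else z j ^ i)) = 0"
proof -
  let ?t = "- (\<Sum>l<k. z l)"
  let ?M = "mat k k (\<lambda>(i,j). if i = m then ?t * z j ^ m + z j ^ k else z j ^ i)"
  define h where "h = (\<Prod>j<k. [:-z j, 1:])"
  have dh: "degree h = k" and lh: "coeff h k = 1" using hprod_deg[of z k] by (auto simp: h_def)
  have cm: "coeff h m = ?t" using vieta2[of z m] by (simp add: h_def k)
  define v where "v = vec k (\<lambda>i. if i = m then 1 else coeff h i)"
  have polyh: "poly h x = (\<Sum>i<m. coeff h i * x ^ i) + ?t * x ^ m + x ^ k" for x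
  proof -
    have "poly h x = (\<Sum>i\<le>k. coeff h i * x ^ i)" by (simp add: poly_altdef dh)
    also have "\<dots> = (\<Sum>i<m. coeff h i * x ^ i) + coeff h m * x ^ m + coeff h k * x ^ k"
      by (simp add: k lessThan_Suc_atMost[symmetric])
    finally show ?thesis using cm lh by simp
  qed
  have root: "poly h (z j) = 0" if "j < k" for j
    unfolding h_def poly_prod using that by (intro prod_zero bexI[of _ j]) auto
  have "transpose_mat ?M *\<^sub>v v = 0\<^sub>v k"
  proof (rule eq_vecI)
    fix j assume j: "j < dim_vec (0\<^sub>v k :: complex vec)"
    then have j: "j < k" by simp
    have "(transpose_mat ?M *\<^sub>v v) $ j = (\<Sum>i<k. ?M $$ (i, j) * v $ i)"
      using j by (simp add: scalar_prod_def atLeast0LessThan row_def v_def mult.commute)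
    also have "\<dots> = (\<Sum>i<k. (if i = m then ?t * z j ^ m + z j ^ k else coeff h i * z j ^ i))"
      using j by (intro sum.cong) (auto simp: v_def)
    also have "\<dots> = (\<Sum>i<m. coeff h i * z j ^ i) + (?t * z j ^ m + z j ^ k)"
      by (simp add: k)
    also have "\<dots> = poly h (z j)" by (simp add: polyh)
    also have "\<dots> = 0" using root[OF j] .
    finally show "(transpose_mat ?M *\<^sub>v v) $ j = 0\<^sub>v k $ j" using j by simp
  qed (simp add: v_def)
  moreover have "v \<noteq> 0\<^sub>v k"
  proof
    assume "v = 0\<^sub>v k"
    then have "v $ m = 0" using k by simp
    then show False using k by (simp add: v_def)
  qed
  moreover have "v \<in> carrier_vec k" by (simp add: v_def)
  ultimately have "det (transpose_mat ?M) = 0"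
    using det_0_iff_vec_prod_zero[of "transpose_mat ?M" k] by auto
  then show ?thesis using det_transpose[of ?M k] by simp
qed


lemma pencil_all:
  fixes a b :: "'i \<Rightarrow> complex" and y :: "complex \<Rightarrow> 'i \<Rightarrow> complex"
  assumes fin: "finite I" and Y: "\<And>t. y t \<in> Y" and supp: "\<And>t. supp_vec I (y t)"
    and Y0: "(\<lambda>_. 0) \<in> Y"
    and lin: "\<And>t i. i \<in> I \<Longrightarrow> y t i = a i * t + b i"
    and a: "\<And>i. i \<in> I \<Longrightarrow> a i \<noteq> 0" and inj: "inj_on (\<lambda>i. b i / a i) I"
  shows "\<forall>q\<in>proj_points I. Hrk I Y q < \<infinity> \<and> (\<forall>r\<ge>1. Hrk I (secant I r Y) q < \<infinity>)"
proof (intro ballI conjI allI impI)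
  fix q assume q: "q \<in> proj_points I"
  show "Hrk I Y q < \<infinity>" by (rule pencil_Hrk[OF fin Y lin a inj q])
  fix r :: nat assume r: "r \<ge> 1"
  show "Hrk I (secant I r Y) q < \<infinity>"
    by (rule pencil_Hrk[OF fin in_secant[OF Y Y0 supp r] lin a inj q])
qed

definition xg :: "nat \<Rightarrow> complex" where "xg j = 2 ^ j"

definition gv :: "nat \<Rightarrow> complex \<Rightarrow> nat \<Rightarrow> nat \<Rightarrow> complex" where
  "gv k t i j = (if i = k - 1 then t * xg j ^ (k - 1) + xg j ^ k else xg j ^ i)"

definition gA :: "nat \<Rightarrow> nat set \<Rightarrow> complex" where
  "gA k S = det (mat k k (\<lambda>(i,j). xg (sorted_list_of_set S ! j) ^ i))"

definition gB :: "nat \<Rightarrow> nat set \<Rightarrow> complex" where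
  "gB k S = det (mat k k (\<lambda>(i,j). if i = k - 1 then xg (sorted_list_of_set S ! j) ^ k
                                    else xg (sorted_list_of_set S ! j) ^ i))"

lemma xg_inj: "inj xg"
proof (rule injI)
  fix a b assume "xg a = xg b"
  then have "(2::complex) ^ a = 2 ^ b" by (simp add: xg_def)
  then have "of_nat (2 ^ a) = (of_nat (2 ^ b) :: complex)" by simp
  then have "(2::nat) ^ a = 2 ^ b" by (simp only: of_nat_eq_iff)
  then show "a = b" by simp
qed

lemma grass_det_lin:
  assumes k: "k \<ge> 1"
  shows "det (mat k k (\<lambda>(i,j). gv k t i (sorted_list_of_set S ! j))) = t * gA k S + gB k S"
proof -
  let ?z = "\<lambda>j. xg (sorted_list_of_set S ! j)"
  have r: "k - 1 < k" using k by simp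
  have e1: "(\<lambda>(i,j). gv k t i (sorted_list_of_set S ! j)) =
     (\<lambda>(i,j). if i = k - 1 then t * ?z j ^ (k - 1) + ?z j ^ k else ?z j ^ i)"
    by (auto simp: fun_eq_iff gv_def)
  have e2: "(\<lambda>(i,j). if i = k - 1 then ?z j ^ (k - 1) else ?z j ^ i) = (\<lambda>(i,j). ?z j ^ i)"
    by (auto simp: fun_eq_iff)
  show ?thesis unfolding e1 det_lin_row[OF r] e2 gA_def gB_def ..
qed

lemma sorted_nth_sum:
  assumes "finite S"
  shows "(\<Sum>l<card S. f (sorted_list_of_set S ! l)) = (\<Sum>j\<in>S. f j)"
proof -
  let ?s = "sorted_list_of_set S"
  have "(\<Sum>j\<in>S. f j) = (\<Sum>j\<in>set ?s. f j)" using assms by simp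
  also have "\<dots> = sum_list (map f ?s)" by (rule sum.distinct_set_conv_list) simp
  also have "\<dots> = (\<Sum>l<card S. f (?s ! l))"
    by (simp add: sum.list_conv_set_nth atLeast0LessThan)
  finally show ?thesis by simp
qed

lemma grass_facts:
  assumes k: "k \<ge> 1" and S: "S \<in> ksubsets k n"
  shows "gA k S \<noteq> 0" "gB k S / gA k S = (\<Sum>j\<in>S. xg j)"
proof -
  let ?s = "sorted_list_of_set S"
  let ?z = "\<lambda>j. xg (?s ! j)"
  have fS: "finite S" and cS: "card S = k" using S by (auto simp: ksubsets_def intro: finite_subset)
  have ls: "length ?s = k" using cS by simp
  have injz: "inj_on ?z {..<k}"
  proof (rule inj_onI)
    fix i j assume i: "i \<in> {..<k}" and j: "j \<in> {..<k}" and e: "?z i = ?z j"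
    then have "?s ! i = ?s ! j" using xg_inj by (auto dest: injD)
    then show "i = j" using i j ls nth_eq_iff_index_eq[OF distinct_sorted_list_of_set] by auto
  qed
  show A0: "gA k S \<noteq> 0" unfolding gA_def by (rule vdm_ne0[OF injz])
  obtain m where km: "k = Suc m" using k by (cases k) auto
  let ?t = "- (\<Sum>l<k. ?z l)"
  have "det (mat k k (\<lambda>(i,j). gv k ?t i (?s ! j))) = 0"
  proof -
    have "(\<lambda>(i,j). gv k ?t i (?s ! j)) = (\<lambda>(i,j). if i = m then ?t * ?z j ^ m + ?z j ^ k else ?z j ^ i)"
      by (auto simp: fun_eq_iff gv_def km)
    then show ?thesis using root_det[OF km, of ?z] by simp
  qed
  then have "?t * gA k S + gB k S = 0" using grass_det_lin[OF k] by simp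
  then have "gB k S = (\<Sum>l<k. ?z l) * gA k S" by (simp add: algebra_simps)
  then have "gB k S / gA k S = (\<Sum>l<k. ?z l)" using A0 by simp
  also have "\<dots> = (\<Sum>j\<in>S. xg j)" using sorted_nth_sum[OF fS, of xg] cS by simp
  finally show "gB k S / gA k S = (\<Sum>j\<in>S. xg j)" .
qed

lemma grass_inj: "inj_on (\<lambda>S. \<Sum>j\<in>S. xg j) (ksubsets k n)"
proof (rule inj_onI)
  fix S T assume S: "S \<in> ksubsets k n" and T: "T \<in> ksubsets k n"
    and e: "(\<Sum>j\<in>S. xg j) = (\<Sum>j\<in>T. xg j)"
  have conv: "(\<Sum>j\<in>U. xg j) = of_nat (\<Sum>j<n. (if j \<in> U then 1 else 0) * 2 ^ j)" if U: "U \<subseteq> {..<n}" for U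
  proof -
    have "(\<Sum>j<n. (if j \<in> U then 1 else 0) * (2::nat) ^ j) = (\<Sum>j<n. if j \<in> U then 2 ^ j else 0)"
      by (intro sum.cong) auto
    also have "\<dots> = (\<Sum>j\<in>{..<n} \<inter> U. 2 ^ j)" using sum.inter_restrict[of "{..<n}" "\<lambda>j. (2::nat)^j" U] by simp
    also have "{..<n} \<inter> U = U" using U by auto
    finally have "(\<Sum>j<n. (if j \<in> U then 1 else 0) * (2::nat) ^ j) = (\<Sum>j\<in>U. 2 ^ j)" .
    then show ?thesis by (simp add: xg_def)
  qed
  have SU: "S \<subseteq> {..<n}" and TU: "T \<subseteq> {..<n}" using S T by (auto simp: ksubsets_def)
  have "(\<Sum>j<n. (if j \<in> S then 1 else 0) * 2 ^ j) = (\<Sum>j<n. (if j \<in> T then 1 else 0) * (2::nat) ^ j)"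
    using e conv[OF SU] conv[OF TU] by (simp only: of_nat_eq_iff)
  then have "\<forall>j<n. (if j \<in> S then 1 else 0) = (if j \<in> T then 1 else (0::nat))"
    by (intro digits_inj[where b=2]) auto
  then show "S = T" using SU TU by (auto split: if_splits)
qed

lemma ksubsets_finite: "finite (ksubsets k n)"
  unfolding ksubsets_def by (rule finite_subset[of _ "Pow {..<n}"]) auto

lemma grass_zero: "k \<ge> 1 \<Longrightarrow> (\<lambda>_. 0) \<in> grassmannian_cone k n"
proof -
  assume k: "k \<ge> 1"
  have "pluecker k n (\<lambda>_ _. 0) = (\<lambda>_. 0)"
  proof
    fix S
    have "mat k k (\<lambda>(i, j). (\<lambda>_ _. 0::complex) i (sorted_list_of_set S ! j)) = 0\<^sub>m k k"
      by (rule eq_matI) auto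
    then show "pluecker k n (\<lambda>_ _. 0) S = 0" using k by (simp add: pluecker_def)
  qed
  then show ?thesis unfolding grassmannian_cone_def by (metis (mono_tags, lifting) mem_Collect_eq)
qed

lemma grass_main:
  assumes "1 \<le> k"
  shows "\<forall>q\<in>proj_points (ksubsets k n).
          Hrk (ksubsets k n) (grassmannian_cone k n) q < \<infinity> \<and>
          (\<forall>r\<ge>1. Hrk (ksubsets k n) (secant (ksubsets k n) r (grassmannian_cone k n)) q < \<infinity>)"
proof (rule pencil_all[where y = "\<lambda>t. pluecker k n (gv k t)" and a = "gA k" and b = "gB k"])
  show "finite (ksubsets k n)" by (rule ksubsets_finite)
  show "pluecker k n (gv k t) \<in> grassmannian_cone k n" for t
    unfolding grassmannian_cone_def by blast
  show "supp_vec (ksubsets k n) (pluecker k n (gv k t))" for t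
    by (simp add: supp_vec_def pluecker_def)
  show "(\<lambda>_. 0) \<in> grassmannian_cone k n" by (rule grass_zero[OF assms])
  show "pluecker k n (gv k t) S = gA k S * t + gB k S" if "S \<in> ksubsets k n" for t S
    using that grass_det_lin[OF assms, of t S] by (simp add: pluecker_def mult.commute)
  show "gA k S \<noteq> 0" if "S \<in> ksubsets k n" for S using grass_facts[OF assms that] by simp
  show "inj_on (\<lambda>S. gB k S / gA k S) (ksubsets k n)"
    using grass_inj[of k n] grass_facts(2)[OF assms] by (simp add: inj_on_def)
qed

lemma lookup_mult_single:
  fixes p :: mpoly
  shows "Poly_Mapping.lookup (p * Poly_Mapping.single (Poly_Mapping.single i 1) c) k =
    (if 1 \<le> Poly_Mapping.lookup k i then Poly_Mapping.lookup p (k - Poly_Mapping.single i 1) * c else 0)"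
proof -
  let ?s = "Poly_Mapping.single i (1::nat)"
  have inner: "(\<Sum>q. Poly_Mapping.lookup (Poly_Mapping.single ?s c) q when k = l + q) = (c when k = l + ?s)" for l
  proof -
    have eq: "(\<lambda>q. Poly_Mapping.lookup (Poly_Mapping.single ?s c) q when k = l + q) = (\<lambda>q. (c when k = l + ?s) when ?s = q)"
      by (auto simp: fun_eq_iff lookup_single when_def)
    have "(\<Sum>q. Poly_Mapping.lookup (Poly_Mapping.single ?s c) q when k = l + q) = (\<Sum>q. (c when k = l + ?s) when ?s = q)"
      by (simp only: eq)
    also have "\<dots> = (c when k = l + ?s)" by (rule Sum_any_when_equal'[where f = "\<lambda>_. c when k = l + ?s"])
    finally show ?thesis .
  qed
  have key: "(k = l + ?s) \<longleftrightarrow> (1 \<le> Poly_Mapping.lookup k i \<and> l = k - ?s)" for l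
  proof
    assume h: "k = l + ?s"
    then show "1 \<le> Poly_Mapping.lookup k i \<and> l = k - ?s" by (simp add: lookup_add)
  next
    assume h: "1 \<le> Poly_Mapping.lookup k i \<and> l = k - ?s"
    show "k = l + ?s"
      by (rule poly_mapping_eqI) (use h in \<open>auto simp: lookup_add lookup_minus lookup_single when_def\<close>)
  qed
  have "Poly_Mapping.lookup (p * Poly_Mapping.single ?s c) k = (\<Sum>l. Poly_Mapping.lookup p l * (c when k = l + ?s))"
    unfolding lookup_mult inner ..
  also have "\<dots> = (\<Sum>l. (Poly_Mapping.lookup p l * c when 1 \<le> Poly_Mapping.lookup k i) when l = k - ?s)"
  proof (rule Sum_any.cong)
    fix l
    show "Poly_Mapping.lookup p l * (c when k = l + ?s) = ((Poly_Mapping.lookup p l * c when 1 \<le> Poly_Mapping.lookup k i) when l = k - ?s)"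
      by (simp only: key[of l]) (auto simp: when_def)
  qed
  also have "\<dots> = (Poly_Mapping.lookup p (k - ?s) * c when 1 \<le> Poly_Mapping.lookup k i)"
    by simp
  finally show ?thesis by (simp add: when_def)
qed

lemma monoms_add: "\<alpha> \<in> monoms a n \<Longrightarrow> \<beta> \<in> monoms b n \<Longrightarrow> \<alpha> + \<beta> \<in> monoms (a + b) n"
  unfolding monoms_def using keys_add[of \<alpha> \<beta>] by (auto simp: lookup_add sum.distrib)

lemma forms_mult: "p \<in> forms a n \<Longrightarrow> q \<in> forms b n \<Longrightarrow> p * q \<in> forms (a + b) n"
  unfolding forms_def using keys_mult[of p q] monoms_add by blast

lemma forms_one: "1 \<in> forms 0 n"
  by (auto simp: forms_def monoms_def)

lemma forms_pow: "p \<in> forms 1 n \<Longrightarrow> p ^ e \<in> forms e n"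
proof (induction e)
  case 0 then show ?case using forms_one by simp
next
  case (Suc e)
  have "p ^ e * p \<in> forms (e + 1) n" by (rule forms_mult) (use Suc in auto)
  then show ?case by (simp add: mult.commute)
qed

lemma forms_zero: "0 \<in> forms d n" by (simp add: forms_def)

definition Wf :: "nat \<Rightarrow> (nat \<Rightarrow> complex) \<Rightarrow> mpoly" where
  "Wf n w = (\<Sum>i\<le>n. Poly_Mapping.single (Poly_Mapping.single i 1) (w i))"

lemma Wf_forms: "Wf n w \<in> forms 1 n"
proof -
  have "Poly_Mapping.keys (Wf n w) \<subseteq> (\<Union>i\<in>{..n}. Poly_Mapping.keys (Poly_Mapping.single (Poly_Mapping.single i (1::nat)) (w i)))"
    unfolding Wf_def by (rule keys_sum)
  also have "\<dots> \<subseteq> monoms 1 n"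
  proof
    fix x assume "x \<in> (\<Union>i\<in>{..n}. Poly_Mapping.keys (Poly_Mapping.single (Poly_Mapping.single i (1::nat)) (w i)))"
    then obtain i where i: "i \<le> n" "x = Poly_Mapping.single i 1" by (auto split: if_splits)
    have "(\<Sum>j\<le>n. Poly_Mapping.lookup (Poly_Mapping.single i (1::nat)) j) = 1"
      using i(1) by (simp add: lookup_single when_def)
    then show "x \<in> monoms 1 n" using i by (simp add: monoms_def)
  qed
  finally show ?thesis by (simp add: forms_def)
qed

lemma forms_lookup: "p \<in> forms d n \<Longrightarrow> \<alpha> \<notin> monoms d n \<Longrightarrow> Poly_Mapping.lookup p \<alpha> = 0"
  unfolding forms_def by (metis (no_types, lifting) mem_Collect_eq not_in_keys_iff_lookup_eq_zero subsetD)

lemma forms_supp: "p \<in> forms d n \<Longrightarrow> supp_vec (monoms d n) (Poly_Mapping.lookup p)"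
  unfolding supp_vec_def using forms_lookup by blast

lemma monoms_outside: "\<alpha> \<in> monoms d n \<Longrightarrow> j > n \<Longrightarrow> Poly_Mapping.lookup \<alpha> j = 0"
proof -
  assume a: "\<alpha> \<in> monoms d n" and j: "j > n"
  have "j \<notin> Poly_Mapping.keys \<alpha>" using a j by (auto simp: monoms_def)
  then show ?thesis by (simp add: in_keys_iff)
qed

lemma monoms_le: "\<alpha> \<in> monoms d n \<Longrightarrow> Poly_Mapping.lookup \<alpha> i \<le> d"
proof -
  assume a: "\<alpha> \<in> monoms d n"
  show ?thesis
  proof (cases "i \<le> n")
    case True
    have "Poly_Mapping.lookup \<alpha> i \<le> (\<Sum>j\<le>n. Poly_Mapping.lookup \<alpha> j)"
      using True by (intro member_le_sum) auto
    then show ?thesis using a by (simp add: monoms_def)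
  next
    case False then show ?thesis using monoms_outside[OF a] by simp
  qed
qed

lemma monoms_eqI:
  assumes "\<alpha> \<in> monoms d n" "\<beta> \<in> monoms d' n" "\<And>i. i \<le> n \<Longrightarrow> Poly_Mapping.lookup \<alpha> i = Poly_Mapping.lookup \<beta> i"
  shows "\<alpha> = \<beta>"
proof (rule poly_mapping_eqI)
  fix j show "Poly_Mapping.lookup \<alpha> j = Poly_Mapping.lookup \<beta> j"
    using assms monoms_outside[OF assms(1), of j] monoms_outside[OF assms(2), of j] by (cases "j \<le> n") auto
qed

lemma monoms_zero: "monoms 0 n = {0}"
proof
  show "monoms 0 n \<subseteq> {0}"
  proof
    fix \<alpha> assume a: "\<alpha> \<in> monoms 0 n"
    have "\<alpha> = 0" by (rule monoms_eqI[OF a, of 0 0]) (use monoms_le[OF a] in \<open>auto simp: monoms_def\<close>)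
    then show "\<alpha> \<in> {0}" by simp
  qed
  show "{0} \<subseteq> monoms 0 n" by (simp add: monoms_def)
qed

lemma monoms_finite: "finite (monoms d n)"
proof -
  let ?f = "\<lambda>\<alpha>. restrict (Poly_Mapping.lookup \<alpha>) {..n}"
  have "inj_on ?f (monoms d n)"
  proof (rule inj_onI)
    fix \<alpha> \<beta> assume a: "\<alpha> \<in> monoms d n" and b: "\<beta> \<in> monoms d n" and e: "?f \<alpha> = ?f \<beta>"
    show "\<alpha> = \<beta>" by (rule monoms_eqI[OF a b]) (metis atMost_iff e restrict_apply')
  qed
  moreover have "?f ` monoms d n \<subseteq> PiE {..n} (\<lambda>_. {..d})"
  proof (rule image_subsetI)
    fix \<alpha> assume "\<alpha> \<in> monoms d n"
    then show "?f \<alpha> \<in> PiE {..n} (\<lambda>_. {..d})" unfolding restrict_PiE_iff using monoms_le by auto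
  qed
  moreover have "finite (PiE {..n} (\<lambda>_. {..d::nat}))" by (rule finite_PiE) auto
  ultimately show ?thesis by (meson finite_imageD finite_subset)
qed

lemma monoms_minus:
  assumes a: "\<alpha> \<in> monoms (Suc e) n" and i: "i \<le> n" and ai: "1 \<le> Poly_Mapping.lookup \<alpha> i"
  shows "\<alpha> - Poly_Mapping.single i 1 \<in> monoms e n"
    "(\<Prod>j\<le>n. fact (Poly_Mapping.lookup (\<alpha> - Poly_Mapping.single i 1) j)) * Poly_Mapping.lookup \<alpha> i
      = (\<Prod>j\<le>n. fact (Poly_Mapping.lookup \<alpha> j) :: nat)"
proof -
  let ?b = "\<alpha> - Poly_Mapping.single i 1"
  have lb: "Poly_Mapping.lookup ?b j = (if j = i then Poly_Mapping.lookup \<alpha> i - 1 else Poly_Mapping.lookup \<alpha> j)" for j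
    by (simp add: lookup_minus lookup_single when_def)
  have keys: "Poly_Mapping.keys ?b \<subseteq> {..n}"
  proof
    fix j assume "j \<in> Poly_Mapping.keys ?b"
    then have "Poly_Mapping.lookup ?b j \<noteq> 0" by (simp add: in_keys_iff)
    then have "Poly_Mapping.lookup \<alpha> j \<noteq> 0" using lb[of j] by (cases "j = i") auto
    then have "j \<in> Poly_Mapping.keys \<alpha>" by (simp add: in_keys_iff)
    then show "j \<in> {..n}" using a by (auto simp: monoms_def)
  qed
  have fin: "finite {..n}" and iin: "i \<in> {..n}" using i by auto
  have s1: "(\<Sum>j\<le>n. Poly_Mapping.lookup \<alpha> j) = Poly_Mapping.lookup \<alpha> i + (\<Sum>j\<in>{..n}-{i}. Poly_Mapping.lookup \<alpha> j)"
    by (rule sum.remove[OF fin iin])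
  have s2: "(\<Sum>j\<le>n. Poly_Mapping.lookup ?b j) = Poly_Mapping.lookup ?b i + (\<Sum>j\<in>{..n}-{i}. Poly_Mapping.lookup ?b j)"
    by (rule sum.remove[OF fin iin])
  have s3: "(\<Sum>j\<in>{..n}-{i}. Poly_Mapping.lookup ?b j) = (\<Sum>j\<in>{..n}-{i}. Poly_Mapping.lookup \<alpha> j)"
    by (intro sum.cong) (auto simp: lookup_minus lookup_single when_def)
  have "(\<Sum>j\<le>n. Poly_Mapping.lookup \<alpha> j) = Suc e" using a by (simp add: monoms_def)
  moreover have lbi: "Poly_Mapping.lookup ?b i = Poly_Mapping.lookup \<alpha> i - 1" by (simp add: lookup_minus)
  ultimately have "(\<Sum>j\<le>n. Poly_Mapping.lookup ?b j) = e" using s1 s2 s3 ai by linarith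
  then show "?b \<in> monoms e n" using keys by (simp add: monoms_def)
  have p1: "(\<Prod>j\<le>n. fact (Poly_Mapping.lookup \<alpha> j)) = fact (Poly_Mapping.lookup \<alpha> i) * (\<Prod>j\<in>{..n}-{i}. fact (Poly_Mapping.lookup \<alpha> j) :: nat)"
    by (rule prod.remove[OF fin iin])
  have p2: "(\<Prod>j\<le>n. fact (Poly_Mapping.lookup ?b j)) = fact (Poly_Mapping.lookup ?b i) * (\<Prod>j\<in>{..n}-{i}. fact (Poly_Mapping.lookup ?b j) :: nat)"
    by (rule prod.remove[OF fin iin])
  have p3: "(\<Prod>j\<in>{..n}-{i}. fact (Poly_Mapping.lookup ?b j) :: nat) = (\<Prod>j\<in>{..n}-{i}. fact (Poly_Mapping.lookup \<alpha> j))"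
    by (intro prod.cong) (auto simp: lookup_minus lookup_single when_def)
  obtain m where m: "Poly_Mapping.lookup \<alpha> i = Suc m" using ai by (cases "Poly_Mapping.lookup \<alpha> i") auto
  show "(\<Prod>j\<le>n. fact (Poly_Mapping.lookup ?b j)) * Poly_Mapping.lookup \<alpha> i = (\<Prod>j\<le>n. fact (Poly_Mapping.lookup \<alpha> j) :: nat)"
    unfolding p1 p2 p3 using lbi by (simp add: m algebra_simps)
qed

abbreviation Ls :: "nat \<Rightarrow> mpoly" where "Ls n \<equiv> Wf n (\<lambda>_. 1)"

definition mfact :: "(nat \<Rightarrow>\<^sub>0 nat) \<Rightarrow> nat \<Rightarrow> complex" where
  "mfact \<alpha> n = of_nat (\<Prod>j\<le>n. fact (Poly_Mapping.lookup \<alpha> j))"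

lemma mfact_ne0: "mfact \<alpha> n \<noteq> 0"
  unfolding mfact_def by (simp only: of_nat_eq_0_iff) (simp add: prod_zero_iff)

lemma lin_step:
  assumes IH: "\<And>\<beta>. \<beta> \<in> monoms e n \<Longrightarrow> Poly_Mapping.lookup (Ls n ^ e) \<beta> = of_nat (fact e) / mfact \<beta> n"
    and a: "\<alpha> \<in> monoms (Suc e) n"
  shows "Poly_Mapping.lookup (Ls n ^ e * Wf n w) \<alpha> = of_nat (fact e) / mfact \<alpha> n * (\<Sum>i\<le>n. of_nat (Poly_Mapping.lookup \<alpha> i) * w i)"
proof -
  have tm: "Poly_Mapping.lookup (Ls n ^ e * Poly_Mapping.single (Poly_Mapping.single i 1) (w i)) \<alpha>
      = of_nat (fact e) / mfact \<alpha> n * (of_nat (Poly_Mapping.lookup \<alpha> i) * w i)" if i: "i \<le> n" for i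
  proof (cases "1 \<le> Poly_Mapping.lookup \<alpha> i")
    case True
    let ?b = "\<alpha> - Poly_Mapping.single i 1"
    have bm: "?b \<in> monoms e n" and pf: "(\<Prod>j\<le>n. fact (Poly_Mapping.lookup ?b j)) * Poly_Mapping.lookup \<alpha> i
      = (\<Prod>j\<le>n. fact (Poly_Mapping.lookup \<alpha> j) :: nat)" using monoms_minus[OF a i True] by auto
    have pf': "mfact ?b n * of_nat (Poly_Mapping.lookup \<alpha> i) = mfact \<alpha> n"
      unfolding mfact_def using pf by (metis of_nat_mult)
    have ai: "(of_nat (Poly_Mapping.lookup \<alpha> i) :: complex) \<noteq> 0" using True by simp
    have "Poly_Mapping.lookup (Ls n ^ e * Poly_Mapping.single (Poly_Mapping.single i 1) (w i)) \<alpha>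
        = of_nat (fact e) / mfact ?b n * w i"
      using True by (simp only: lookup_mult_single IH[OF bm] if_True)
    also have "\<dots> = of_nat (fact e) / mfact \<alpha> n * (of_nat (Poly_Mapping.lookup \<alpha> i) * w i)"
      unfolding pf'[symmetric] using ai mfact_ne0[of ?b n] by (simp add: field_simps)
    finally show ?thesis .
  next
    case False
    then show ?thesis by (simp only: lookup_mult_single if_False) simp
  qed
  have "Poly_Mapping.lookup (Ls n ^ e * Wf n w) \<alpha>
      = (\<Sum>i\<le>n. Poly_Mapping.lookup (Ls n ^ e * Poly_Mapping.single (Poly_Mapping.single i 1) (w i)) \<alpha>)"
    unfolding Wf_def sum_distrib_left lookup_sum ..
  also have "\<dots> = (\<Sum>i\<le>n. of_nat (fact e) / mfact \<alpha> n * (of_nat (Poly_Mapping.lookup \<alpha> i) * w i))"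
    by (intro sum.cong refl tm) simp
  also have "\<dots> = of_nat (fact e) / mfact \<alpha> n * (\<Sum>i\<le>n. of_nat (Poly_Mapping.lookup \<alpha> i) * w i)"
    by (simp add: sum_distrib_left)
  finally show ?thesis .
qed

lemma monoms_sum_c: "\<alpha> \<in> monoms d n \<Longrightarrow> (\<Sum>i\<le>n. (of_nat (Poly_Mapping.lookup \<alpha> i) :: complex)) = of_nat d"
  unfolding monoms_def by (simp flip: of_nat_sum)

lemma Lpow: "\<alpha> \<in> monoms e n \<Longrightarrow> Poly_Mapping.lookup (Ls n ^ e) \<alpha> = of_nat (fact e) / mfact \<alpha> n"
proof (induction e arbitrary: \<alpha>)
  case 0
  then have "\<alpha> = 0" using monoms_zero by auto
  then show ?case by (simp add: mfact_def lookup_one)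
next
  case (Suc e)
  have "Poly_Mapping.lookup (Ls n ^ Suc e) \<alpha> = Poly_Mapping.lookup (Ls n ^ e * Ls n) \<alpha>"
    by (simp only: power_Suc2)
  also have "\<dots> = of_nat (fact e) / mfact \<alpha> n * (\<Sum>i\<le>n. of_nat (Poly_Mapping.lookup \<alpha> i) * 1)"
    by (rule lin_step[OF Suc.IH Suc.prems])
  also have "\<dots> = of_nat (fact e) / mfact \<alpha> n * of_nat (Suc e)"
    using monoms_sum_c[OF Suc.prems] by simp
  also have "\<dots> = of_nat (fact (Suc e)) / mfact \<alpha> n"
    by (simp add: fact_Suc algebra_simps)
  finally show ?case .
qed

definition yf :: "nat \<Rightarrow> nat \<Rightarrow> complex \<Rightarrow> mpoly" where
  "yf e n t = Ls n ^ e * Wf n (\<lambda>i. t + of_nat ((e + 2) ^ i))"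

definition aF :: "nat \<Rightarrow> nat \<Rightarrow> (nat \<Rightarrow>\<^sub>0 nat) \<Rightarrow> complex" where
  "aF e n \<alpha> = of_nat (fact e) / mfact \<alpha> n * of_nat (Suc e)"

definition bF :: "nat \<Rightarrow> nat \<Rightarrow> (nat \<Rightarrow>\<^sub>0 nat) \<Rightarrow> complex" where
  "bF e n \<alpha> = of_nat (fact e) / mfact \<alpha> n * of_nat (\<Sum>i\<le>n. Poly_Mapping.lookup \<alpha> i * (e + 2) ^ i)"

lemma yf_lin: "\<alpha> \<in> monoms (Suc e) n \<Longrightarrow> Poly_Mapping.lookup (yf e n t) \<alpha> = aF e n \<alpha> * t + bF e n \<alpha>"
proof -
  assume a: "\<alpha> \<in> monoms (Suc e) n"
  have "Poly_Mapping.lookup (yf e n t) \<alpha> = of_nat (fact e) / mfact \<alpha> n *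
      (\<Sum>i\<le>n. of_nat (Poly_Mapping.lookup \<alpha> i) * (t + of_nat ((e + 2) ^ i)))"
    unfolding yf_def by (rule lin_step[OF Lpow a])
  also have "(\<Sum>i\<le>n. of_nat (Poly_Mapping.lookup \<alpha> i) * (t + of_nat ((e + 2) ^ i)))
     = (\<Sum>i\<le>n. of_nat (Poly_Mapping.lookup \<alpha> i)) * t + (\<Sum>i\<le>n. of_nat (Poly_Mapping.lookup \<alpha> i) * of_nat ((e + 2) ^ i))"
    by (simp only: distrib_left sum.distrib sum_distrib_right)
  also have "\<dots> = of_nat (Suc e) * t + of_nat (\<Sum>i\<le>n. Poly_Mapping.lookup \<alpha> i * (e + 2) ^ i)"
    using monoms_sum_c[OF a] by simp
  finally have h: "Poly_Mapping.lookup (yf e n t) \<alpha> = of_nat (fact e) / mfact \<alpha> n *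
      (of_nat (Suc e) * t + of_nat (\<Sum>i\<le>n. Poly_Mapping.lookup \<alpha> i * (e + 2) ^ i))" .
  have g: "\<And>c x y :: complex. c * (x * t + y) = c * x * t + c * y" by (simp add: algebra_simps)
  show ?thesis unfolding aF_def bF_def h by (rule g)
qed

lemma aF_ne0: "aF e n \<alpha> \<noteq> 0"
proof -
  have "(of_nat (fact e) :: complex) \<noteq> 0" by simp
  moreover have "(of_nat (Suc e) :: complex) \<noteq> 0" by (rule of_nat_neq_0)
  ultimately show ?thesis
    unfolding aF_def mult_eq_0_iff divide_eq_0_iff de_Morgan_disj using mfact_ne0[of \<alpha> n] by blast
qed

lemma yf_inj: "inj_on (\<lambda>\<alpha>. bF e n \<alpha> / aF e n \<alpha>) (monoms (Suc e) n)"
proof (rule inj_onI)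
  fix \<alpha> \<beta> assume a: "\<alpha> \<in> monoms (Suc e) n" and b: "\<beta> \<in> monoms (Suc e) n"
    and eq: "bF e n \<alpha> / aF e n \<alpha> = bF e n \<beta> / aF e n \<beta>"
  have r: "bF e n \<gamma> / aF e n \<gamma> = of_nat (\<Sum>i\<le>n. Poly_Mapping.lookup \<gamma> i * (e + 2) ^ i) / of_nat (Suc e)" for \<gamma>
  proof -
    have "of_nat (fact e) / mfact \<gamma> n \<noteq> 0" using mfact_ne0[of \<gamma> n] by simp
    then show ?thesis unfolding aF_def bF_def by (rule mult_divide_mult_cancel_left)
  qed
  have "(of_nat (\<Sum>i\<le>n. Poly_Mapping.lookup \<alpha> i * (e + 2) ^ i) :: complex) = of_nat (\<Sum>i\<le>n. Poly_Mapping.lookup \<beta> i * (e + 2) ^ i)"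
  proof -
    have ne: "(of_nat (Suc e) :: complex) \<noteq> 0" by (rule of_nat_neq_0)
    show ?thesis using eq unfolding r by (metis ne divide_cancel_right)
  qed
  then have "(\<Sum>i<Suc n. Poly_Mapping.lookup \<alpha> i * (e + 2) ^ i) = (\<Sum>i<Suc n. Poly_Mapping.lookup \<beta> i * (e + 2) ^ i)"
    by (simp only: of_nat_eq_iff lessThan_Suc_atMost)
  then have "\<forall>i<Suc n. Poly_Mapping.lookup \<alpha> i = Poly_Mapping.lookup \<beta> i"
    using monoms_le[OF a] monoms_le[OF b] by (intro digits_inj[where b = "e + 2"]) (auto simp: less_Suc_eq_le)
  then show "\<alpha> = \<beta>" by (intro monoms_eqI[OF a b]) auto
qed

lemma forms_main:
  assumes Y: "\<And>t. Poly_Mapping.lookup (yf e n t) \<in> Y" and Y0: "(\<lambda>_. 0) \<in> Y"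
  shows "\<forall>q\<in>proj_points (monoms (Suc e) n). Hrk (monoms (Suc e) n) Y q < \<infinity> \<and>
      (\<forall>r\<ge>1. Hrk (monoms (Suc e) n) (secant (monoms (Suc e) n) r Y) q < \<infinity>)"
proof (rule pencil_all[where y = "\<lambda>t. Poly_Mapping.lookup (yf e n t)" and a = "aF e n" and b = "bF e n"])
  show "finite (monoms (Suc e) n)" by (rule monoms_finite)
  show "Poly_Mapping.lookup (yf e n t) \<in> Y" for t by (rule Y)
  have "yf e n t \<in> forms (e + 1) n" for t
    unfolding yf_def by (intro forms_mult forms_pow Wf_forms)
  then show "supp_vec (monoms (Suc e) n) (Poly_Mapping.lookup (yf e n t))" for t
    using forms_supp by simp
  show "(\<lambda>_. 0) \<in> Y" by (rule Y0)
  show "Poly_Mapping.lookup (yf e n t) \<alpha> = aF e n \<alpha> * t + bF e n \<alpha>" if "\<alpha> \<in> monoms (Suc e) n" for t \<alpha>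
    using yf_lin[OF that] .
  show "aF e n \<alpha> \<noteq> 0" for \<alpha> by (rule aF_ne0)
  show "inj_on (\<lambda>\<alpha>. bF e n \<alpha> / aF e n \<alpha>) (monoms (Suc e) n)" by (rule yf_inj)
qed

lemma lookup_zero_fun: "Poly_Mapping.lookup (0::mpoly) = (\<lambda>_. 0)"
  by (simp add: fun_eq_iff)

lemma Wf_forms': "Wf n w \<in> forms (Suc 0) n" using Wf_forms by simp

lemma tang_main:
  assumes "1 \<le> d"
  shows "\<forall>q\<in>proj_points (monoms d n).
          Hrk (monoms d n) (tangential_cone d n) q < \<infinity> \<and>
          (\<forall>r\<ge>1. Hrk (monoms d n) (secant (monoms d n) r (tangential_cone d n)) q < \<infinity>)"
proof -
  obtain e where d: "d = Suc e" using assms by (cases d) auto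
  let ?S = "{Poly_Mapping.lookup (L ^ (Suc e - 1) * M) | L M. L \<in> forms 1 n \<and> M \<in> forms 1 n}"
  show ?thesis unfolding d
  proof (rule forms_main)
    fix t
    let ?W = "Wf n (\<lambda>i. t + of_nat ((e + 2) ^ i))"
    have h: "Poly_Mapping.lookup (yf e n t) = Poly_Mapping.lookup (Ls n ^ (Suc e - 1) * ?W) \<and> Ls n \<in> forms 1 n \<and> ?W \<in> forms 1 n"
      unfolding yf_def using Wf_forms by simp
    have "Poly_Mapping.lookup (yf e n t) \<in> ?S"
      by (rule CollectI, rule exI[of _ "Ls n"], rule exI[of _ ?W]) (rule h)
    moreover have "yf e n t \<in> forms (e + 1) n"
      unfolding yf_def by (intro forms_mult forms_pow Wf_forms)
    then have "supp_vec (monoms (Suc e) n) (Poly_Mapping.lookup (yf e n t))"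
      using forms_supp by simp
    ultimately show "Poly_Mapping.lookup (yf e n t) \<in> tangential_cone (Suc e) n"
      unfolding tangential_cone_def by (rule zar_closure_sup)
  next
    have h: "Poly_Mapping.lookup (Ls n ^ (Suc e - 1) * 0) = Poly_Mapping.lookup (Ls n ^ (Suc e - 1) * 0) \<and> Ls n \<in> forms 1 n \<and> 0 \<in> forms 1 n"
      using Wf_forms forms_zero by simp
    have "Poly_Mapping.lookup (Ls n ^ (Suc e - 1) * 0) \<in> ?S"
      by (rule CollectI, rule exI[of _ "Ls n"], rule exI[of _ 0]) (rule h)
    then have "(\<lambda>_. 0) \<in> ?S" by (simp add: lookup_zero_fun)
    moreover have "supp_vec (monoms (Suc e) n) (\<lambda>_. 0)" by (simp add: supp_vec_def)
    ultimately show "(\<lambda>_. 0) \<in> tangential_cone (Suc e) n"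
      unfolding tangential_cone_def by (rule zar_closure_sup)
  qed
qed

lemma chow_pos_main:
  "\<forall>q\<in>proj_points (monoms (Suc e) n).
          Hrk (monoms (Suc e) n) (chow_cone (Suc e) n) q < \<infinity> \<and>
          (\<forall>r\<ge>1. Hrk (monoms (Suc e) n) (secant (monoms (Suc e) n) r (chow_cone (Suc e) n)) q < \<infinity>)"
proof (rule forms_main)
  fix t
  define L where "L i = (if i < e then Ls n else Wf n (\<lambda>i. t + of_nat ((e + 2) ^ i)))" for i
  have "(\<Prod>i<Suc e. L i) = (\<Prod>i<e. L i) * L e" by simp
  also have "(\<Prod>i<e. L i) = (\<Prod>i<e. Ls n)" by (intro prod.cong) (auto simp: L_def)
  also have "\<dots> = Ls n ^ e" by simp
  finally have "(\<Prod>i<Suc e. L i) = yf e n t" by (simp add: L_def yf_def)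
  moreover have "\<forall>i<Suc e. L i \<in> forms 1 n" by (simp add: L_def Wf_forms')
  ultimately have h: "Poly_Mapping.lookup (yf e n t) = Poly_Mapping.lookup (\<Prod>i<Suc e. L i) \<and> (\<forall>i<Suc e. L i \<in> forms 1 n)"
    by simp
  show "Poly_Mapping.lookup (yf e n t) \<in> chow_cone (Suc e) n"
    unfolding chow_cone_def by (rule CollectI, rule exI[of _ L]) (rule h)
next
  have "(\<Prod>i<Suc e. (\<lambda>_. 0::mpoly) i) = 0" by simp
  moreover have "\<forall>i<Suc e. (\<lambda>_. 0::mpoly) i \<in> forms 1 n" by (simp add: forms_zero)
  ultimately have h: "Poly_Mapping.lookup 0 = Poly_Mapping.lookup (\<Prod>i<Suc e. (\<lambda>_. 0::mpoly) i) \<and> (\<forall>i<Suc e. (\<lambda>_. 0::mpoly) i \<in> forms 1 n)"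
    by simp
  have "Poly_Mapping.lookup 0 \<in> chow_cone (Suc e) n"
    unfolding chow_cone_def by (rule CollectI, rule exI[of _ "\<lambda>_. 0"]) (rule h)
  then show "(\<lambda>_. 0) \<in> chow_cone (Suc e) n" by (simp add: lookup_zero_fun)
qed

lemma single_Hrk:
  assumes I: "I = {i0}" and y: "y \<in> Y" "y i0 \<noteq> 0" and q: "q \<in> proj_points I"
  shows "Hrk I Y q < \<infinity>"
proof -
  have q0: "q i0 \<noteq> 0" using q I by (auto simp: proj_points_def nonzero_vec_def)
  have "hadamard_decomp I Y q 1" unfolding hadamard_decomp_def
    by (intro exI[of _ "\<lambda>_. y"] exI[of _ "q i0 / y i0"]) (use y q0 I in \<open>auto simp: nonzero_vec_def\<close>)
  then show ?thesis by (rule Hrk_finI[rotated]) simp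
qed

lemma chow0_main:
  "\<forall>q\<in>proj_points (monoms 0 n).
          Hrk (monoms 0 n) (chow_cone 0 n) q < \<infinity> \<and>
          (\<forall>r\<ge>1. Hrk (monoms 0 n) (secant (monoms 0 n) r (chow_cone 0 n)) q < \<infinity>)"
proof (intro ballI conjI allI impI)
  fix q assume q: "q \<in> proj_points (monoms 0 n)"
  have y: "Poly_Mapping.lookup 1 \<in> chow_cone 0 n"
    unfolding chow_cone_def by auto
  show "Hrk (monoms 0 n) (chow_cone 0 n) q < \<infinity>"
    by (rule single_Hrk[OF monoms_zero y _ q]) (simp add: lookup_one)
  fix r :: nat assume r: "r \<ge> 1"
  let ?y = "\<lambda>\<alpha>. \<Sum>j<r. Poly_Mapping.lookup (1::mpoly) \<alpha>"
  have "?y \<in> {(\<lambda>i. \<Sum>j<r. v j i) | v. \<forall>j<r. v j \<in> chow_cone 0 n}"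
    using y by (intro CollectI exI[of _ "\<lambda>_. Poly_Mapping.lookup 1"]) simp
  moreover have "supp_vec (monoms 0 n) ?y"
    by (simp add: supp_vec_def monoms_zero lookup_one)
  ultimately have ys: "?y \<in> secant (monoms 0 n) r (chow_cone 0 n)"
    unfolding secant_def by (rule zar_closure_sup)
  show "Hrk (monoms 0 n) (secant (monoms 0 n) r (chow_cone 0 n)) q < \<infinity>"
    by (rule single_Hrk[OF monoms_zero ys _ q]) (use r in \<open>simp add: lookup_one\<close>)
qed

lemma red_main:
  assumes ds: "ds \<noteq> []" "\<forall>di\<in>set ds. 0 < di"
  shows "\<forall>q\<in>proj_points (monoms (sum_list ds) n).
          Hrk (monoms (sum_list ds) n) (reducible_cone ds n) q < \<infinity> \<and>
          (\<forall>r\<ge>1. Hrk (monoms (sum_list ds) n)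
                     (secant (monoms (sum_list ds) n) r (reducible_cone ds n)) q < \<infinity>)"
proof -
  obtain K where K: "length ds = Suc K" using ds(1) by (cases ds) auto
  have dK: "ds ! K > 0" using ds(2) K by (metis lessI nth_mem)
  have sl: "sum_list ds = (\<Sum>i<K. ds ! i) + ds ! K"
    by (simp add: sum.list_conv_set_nth K atLeast0LessThan)
  define e where "e = (\<Sum>i<K. ds ! i) + (ds ! K - 1)"
  have se: "sum_list ds = Suc e" using sl dK by (simp add: e_def)
  show ?thesis unfolding se
  proof (rule forms_main)
    fix t
    let ?W = "Wf n (\<lambda>i. t + of_nat ((e + 2) ^ i))"
    define F where "F i = (if i = K then Ls n ^ (ds ! K - 1) * ?W else Ls n ^ (ds ! i))" for i
    have "(\<Prod>i<length ds. F i) = (\<Prod>i<K. F i) * F K" by (simp add: K)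
    also have "(\<Prod>i<K. F i) = (\<Prod>i<K. Ls n ^ (ds ! i))" by (intro prod.cong) (auto simp: F_def)
    also have "\<dots> = Ls n ^ (\<Sum>i<K. ds ! i)" by (simp add: power_sum)
    finally have "(\<Prod>i<length ds. F i) = yf e n t"
      by (simp add: F_def yf_def e_def power_add mult.assoc)
    moreover have "\<forall>i<length ds. F i \<in> forms (ds ! i) n"
    proof (intro allI impI)
      fix i assume "i < length ds"
      show "F i \<in> forms (ds ! i) n"
      proof (cases "i = K")
        case True
        have "Ls n ^ (ds ! K - 1) * ?W \<in> forms (ds ! K - 1 + 1) n"
          by (intro forms_mult forms_pow Wf_forms)
        then show ?thesis using True dK by (simp add: F_def)
      next
        case False
        then show ?thesis by (simp add: F_def) (intro forms_pow Wf_forms)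
      qed
    qed
    ultimately have h: "Poly_Mapping.lookup (yf e n t) = Poly_Mapping.lookup (\<Prod>i<length ds. F i) \<and> (\<forall>i<length ds. F i \<in> forms (ds ! i) n)"
      by simp
    show "Poly_Mapping.lookup (yf e n t) \<in> reducible_cone ds n"
      unfolding reducible_cone_def by (rule CollectI, rule exI[of _ F]) (rule h)
  next
    have "(\<Prod>i<length ds. (\<lambda>_. 0::mpoly) i) = 0" by (simp add: K)
    moreover have "\<forall>i<length ds. (\<lambda>_. 0::mpoly) i \<in> forms (ds ! i) n" by (simp add: forms_zero)
    ultimately have h: "Poly_Mapping.lookup 0 = Poly_Mapping.lookup (\<Prod>i<length ds. (\<lambda>_. 0::mpoly) i) \<and> (\<forall>i<length ds. (\<lambda>_. 0::mpoly) i \<in> forms (ds ! i) n)"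
      by simp
    have "Poly_Mapping.lookup 0 \<in> reducible_cone ds n"
      unfolding reducible_cone_def by (rule CollectI, rule exI[of _ "\<lambda>_. 0"]) (rule h)
    then show "(\<lambda>_. 0) \<in> reducible_cone ds n" by (simp add: lookup_zero_fun)
  qed
qed

theorem mainTheorem9:
  shows
   "(\<forall>k n. 1 \<le> k \<and> k < n \<longrightarrow>
       (\<forall>q\<in>proj_points (ksubsets k n).
          Hrk (ksubsets k n) (grassmannian_cone k n) q < \<infinity> \<and>
          (\<forall>r\<ge>1. Hrk (ksubsets k n) (secant (ksubsets k n) r (grassmannian_cone k n)) q < \<infinity>)))
    \<and> (\<forall>d n. 1 \<le> d \<and> 1 \<le> n \<longrightarrow>
       (\<forall>q\<in>proj_points (monoms d n).
          Hrk (monoms d n) (tangential_cone d n) q < \<infinity> \<and>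
          (\<forall>r\<ge>1. Hrk (monoms d n) (secant (monoms d n) r (tangential_cone d n)) q < \<infinity>)))
    \<and> (\<forall>d n.
       (\<forall>q\<in>proj_points (monoms d n).
          Hrk (monoms d n) (chow_cone d n) q < \<infinity> \<and>
          (\<forall>r\<ge>1. Hrk (monoms d n) (secant (monoms d n) r (chow_cone d n)) q < \<infinity>)))
    \<and> (\<forall>ds n. ds \<noteq> [] \<and> (\<forall>di\<in>set ds. 0 < di) \<longrightarrow>
       (\<forall>q\<in>proj_points (monoms (sum_list ds) n).
          Hrk (monoms (sum_list ds) n) (reducible_cone ds n) q < \<infinity> \<and>
          (\<forall>r\<ge>1. Hrk (monoms (sum_list ds) n)
                     (secant (monoms (sum_list ds) n) r (reducible_cone ds n)) q < \<infinity>)))"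
proof (intro conjI allI impI)
  fix k n :: nat assume "1 \<le> k \<and> k < n"
  then show "\<forall>q\<in>proj_points (ksubsets k n).
          Hrk (ksubsets k n) (grassmannian_cone k n) q < \<infinity> \<and>
          (\<forall>r\<ge>1. Hrk (ksubsets k n) (secant (ksubsets k n) r (grassmannian_cone k n)) q < \<infinity>)"
    using grass_main by blast
next
  fix d n :: nat assume "1 \<le> d \<and> 1 \<le> n"
  then show "\<forall>q\<in>proj_points (monoms d n).
          Hrk (monoms d n) (tangential_cone d n) q < \<infinity> \<and>
          (\<forall>r\<ge>1. Hrk (monoms d n) (secant (monoms d n) r (tangential_cone d n)) q < \<infinity>)"
    using tang_main by blast
next
  fix d n :: nat
  show "\<forall>q\<in>proj_points (monoms d n).
          Hrk (monoms d n) (chow_cone d n) q < \<infinity> \<and>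
          (\<forall>r\<ge>1. Hrk (monoms d n) (secant (monoms d n) r (chow_cone d n)) q < \<infinity>)"
  proof (cases d)
    case 0 then show ?thesis using chow0_main by simp
  next
    case (Suc e) then show ?thesis using chow_pos_main by simp
  qed
next
  fix ds :: "nat list" and n :: nat assume "ds \<noteq> [] \<and> (\<forall>di\<in>set ds. 0 < di)"
  then show "\<forall>q\<in>proj_points (monoms (sum_list ds) n).
          Hrk (monoms (sum_list ds) n) (reducible_cone ds n) q < \<infinity> \<and>
          (\<forall>r\<ge>1. Hrk (monoms (sum_list ds) n)
                     (secant (monoms (sum_list ds) n) r (reducible_cone ds n)) q < \<infinity>)"
    using red_main by blast
qed

end
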